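(* Let $n\ge 4$, $\nu=2^n$, $\sigma^2>0$ and $0<\rho<1$. Suppose the vector of treatment effects $\tau=(\tau(i))_{i\in\Omega}$ is a zero-mean Gaussian random vector with $\operatorname{cov}(\tau(i),\tau(i'))=\sigma^2\rho^{\,\#\{k:\ i_k\neq i'_k\}}$ for all $i,i'\in\Omega$ (equivalently $\operatorname{cov}(\tau)=\sigma^2\mathbf R^{\otimes n}$ in lexicographic order, where $\mathbf R$ is the $2\times 2$ matrix with diagonal entries $1$ and off-diagonal entries $\rho$). Then for every $s\in\{0,1,2\}$, every $1\le l\le n-2$ and every $j=(j_1,\dots,j_n)\in\Omega_{sl}$, $$\operatorname{var}\big(\beta(j_1\cdots j_n)\big)=\sigma^2\nu^{-1}(1+\rho)^{\,n-l-s}(1-\rho)^{\,l}.$$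
   Context: Let $\Omega=\{0,1\}^n$. The conditional effects are defined from treatment effects $\tau(i)$, $i\in\Omega$, by $$\beta(j)=\nu^{-1}\sum_{i\in\Omega} g(j_1,j_2;i_1,i_2)\,g(j_3,j_4;i_3,i_4)\prod_{k=5}^{n}(-1)^{j_k i_k}\,\tau(i),\qquad j\in\Omega,$$ where $g(0,b;a,a')=(-1)^{b a'}$ and $g(1,b;a,a')=\sqrt2\,(-1)^{a}\,\mathbf 1[a'=b]$ for $a,a',b\in\{0,1\}$. (Here $F_1,F_2$ and $F_3,F_4$ are two pairs of conditional/conditioned factors: effects involving $F_1$ are defined conditionally on each level of $F_2$, and those involving $F_3$ conditionally on each level of $F_4$.) For $1\le l\le n-2$ define $\Omega_{0l}=\{j: j_1=j_3=0,\ \text{exactly } l \text{ of } j_2,j_4,j_5,\dots,j_n \text{ equal } 1\}$; $\Omega_{1l}=\{j: j_1=1,\ j_2\in\{0,1\},\ j_3=0,\ \text{exactly } l-1 \text{ of } j_4,\dots,j_n \text{ equal }1\}\cup\{j: j_3=1,\ j_4\in\{0,1\},\ j_1=0,\ \text{exactly } l-1 \text{ of } j_2,j_5,\dots,j_n \text{ equal }1\}$; $\Omega_{2l}=\{j: j_1=j_3=1,\ j_2,j_4\in\{0,1\},\ \text{exactly } l-2 \text{ of } j_5,\dots,j_n \text{ equal }1\}$ (empty when $l=1$). *)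

theory Defs
  imports "HOL-Probability.Probability"
begin

definition Omega :: "nat \<Rightarrow> (nat \<Rightarrow> nat) set" where
  "Omega n = ({1..n} \<rightarrow>\<^sub>E {0, 1})"

definition hamming :: "nat \<Rightarrow> (nat \<Rightarrow> nat) \<Rightarrow> (nat \<Rightarrow> nat) \<Rightarrow> nat" where
  "hamming n i i' = card {k \<in> {1..n}. i k \<noteq> i' k}"

definition g :: "nat \<Rightarrow> nat \<Rightarrow> nat \<Rightarrow> nat \<Rightarrow> real" where
  "g j b a a' = (if j = 0 then (-1) ^ (b * a')
                 else sqrt 2 * (-1) ^ a * (if a' = b then 1 else 0))"

definition coef :: "nat \<Rightarrow> (nat \<Rightarrow> nat) \<Rightarrow> (nat \<Rightarrow> nat) \<Rightarrow> real" where
  "coef n j i = (1 / 2 ^ n) * g (j 1) (j 2) (i 1) (i 2) * g (j 3) (j 4) (i 3) (i 4)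
       * (\<Prod>k\<in>{5..n}. (-1) ^ (j k * i k))"

definition beta :: "nat \<Rightarrow> ((nat \<Rightarrow> nat) \<Rightarrow> 'a \<Rightarrow> real) \<Rightarrow> (nat \<Rightarrow> nat) \<Rightarrow> 'a \<Rightarrow> real" where
  "beta n tau j = (\<lambda>\<omega>. \<Sum>i\<in>Omega n. coef n j i * tau i \<omega>)"

definition ones :: "(nat \<Rightarrow> nat) \<Rightarrow> nat set \<Rightarrow> nat" where
  "ones j K = card {k \<in> K. j k = 1}"

definition Omega_sl :: "nat \<Rightarrow> nat \<Rightarrow> nat \<Rightarrow> (nat \<Rightarrow> nat) set" where
  "Omega_sl n s l =
    (if s = 0 then {j \<in> Omega n. j 1 = 0 \<and> j 3 = 0 \<and> ones j ({2, 4} \<union> {5..n}) = l}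
     else if s = 1 then
       {j \<in> Omega n. j 1 = 1 \<and> j 3 = 0 \<and> ones j {4..n} + 1 = l}
       \<union> {j \<in> Omega n. j 3 = 1 \<and> j 1 = 0 \<and> ones j ({2} \<union> {5..n}) + 1 = l}
     else if s = 2 then
       {j \<in> Omega n. j 1 = 1 \<and> j 3 = 1 \<and> ones j {5..n} + 2 = l}
     else {})"

definition covariance :: "'a measure \<Rightarrow> ('a \<Rightarrow> real) \<Rightarrow> ('a \<Rightarrow> real) \<Rightarrow> real" where
  "covariance M X Y =
     (\<integral>\<omega>. (X \<omega> - (\<integral>x. X x \<partial>M)) * (Y \<omega> - (\<integral>x. Y x \<partial>M)) \<partial>M)"

end

theory Submission
  imports Defs
begin

lemma sum_sum_PiE:
  fixes F :: "'a \<Rightarrow> 'b \<Rightarrow> 'b \<Rightarrow> real"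
  assumes "finite A" "finite B"
  shows "(\<Sum>i\<in>PiE A (\<lambda>_. B). \<Sum>i'\<in>PiE A (\<lambda>_. B). \<Prod>k\<in>A. F k (i k) (i' k))
       = (\<Prod>k\<in>A. \<Sum>a\<in>B. \<Sum>b\<in>B. F k a b)"
proof -
  have "(\<Sum>i\<in>PiE A (\<lambda>_. B). \<Sum>i'\<in>PiE A (\<lambda>_. B). \<Prod>k\<in>A. F k (i k) (i' k))
      = (\<Sum>i\<in>PiE A (\<lambda>_. B). \<Prod>k\<in>A. \<Sum>b\<in>B. F k (i k) b)"
    using prod_sum_PiE[of A "\<lambda>_. B", symmetric] assms by (intro sum.cong) auto
  also have "\<dots> = (\<Prod>k\<in>A. \<Sum>a\<in>B. \<Sum>b\<in>B. F k a b)"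
    using prod_sum_PiE[of A "\<lambda>_. B" "\<lambda>k a. \<Sum>b\<in>B. F k a b", symmetric] assms by auto
  finally show ?thesis .
qed

lemma prod_if_pow:
  fixes r :: real
  assumes "finite A"
  shows "(\<Prod>k\<in>A. if P k then r else 1) = r ^ card {k\<in>A. P k}"
  using assms by (simp add: prod.If_cases Collect_conj_eq Int_commute)

lemma card_sum_if:
  assumes "finite K"
  shows "card {k\<in>K. P k} = (\<Sum>k\<in>K. if P k then 1 else 0::nat)"
  using assms by (simp add: sum.If_cases Collect_conj_eq Int_commute)

lemma arith_final:
  fixes sg rho :: real
  assumes "n = 4 + m + r" "l = b1 + b2 + m" "n - l - s = a1 + a2 + r"
  shows "sg/(2^n)^2 * ((4*(1+rho)^a1*(1-rho)^b1) * (4*(1+rho)^a2*(1-rho)^b2) * ((2*(1-rho))^m * (2*(1+rho))^r))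
     = sg/2^n*(1+rho)^(n-l-s)*(1-rho)^l"
proof -
  have e: "n - l - s = a1 + a2 + r" by fact
  have p: "(2::real)^n = 16 * 2^m * 2^r" using assms(1) by (simp add: power_add)
  show ?thesis unfolding e unfolding assms(2) p
    apply (simp only: power_add power_mult_distrib)
    by (simp add: power2_eq_square field_simps)
qed

lemma abs_prod_le_sq: "\<bar>a * b\<bar> \<le> a\<^sup>2 + (b::real)\<^sup>2"
proof -
  have "0 \<le> (\<bar>a\<bar> - \<bar>b\<bar>)\<^sup>2" by simp
  moreover have "\<bar>a\<bar> * \<bar>a\<bar> = a * a" "\<bar>b\<bar> * \<bar>b\<bar> = b * b" by (simp_all add: abs_mult_self_eq)
  moreover have "0 \<le> \<bar>a\<bar> * \<bar>b\<bar>" by simp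
  ultimately have "\<bar>a\<bar> * (\<bar>b\<bar> * 2) \<le> a * a + b * b" "0 \<le> \<bar>a\<bar> * \<bar>b\<bar>"
    by (simp_all add: power2_eq_square algebra_simps)
  thus ?thesis unfolding abs_mult power2_eq_square by linarith
qed

definition w :: "(nat \<Rightarrow> nat) \<Rightarrow> nat \<Rightarrow> nat \<Rightarrow> real" where
  "w j k a = (if k = 1 then (if j 1 = 0 then 1 else sqrt 2 * (-1)^a)
    else if k = 2 then (if j 1 = 0 then (-1)^(j 2 * a) else (if a = j 2 then 1 else 0))
    else if k = 3 then (if j 3 = 0 then 1 else sqrt 2 * (-1)^a)
    else if k = 4 then (if j 3 = 0 then (-1)^(j 4 * a) else (if a = j 4 then 1 else 0))
    else (-1)^(j k * a))"

lemma Icc_split: "(4::nat) \<le> n \<Longrightarrow> {1..n} = insert 1 (insert 2 (insert 3 (insert 4 {5..n})))"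
  by auto

lemma coef_prod:
  assumes "4 \<le> n"
  shows "coef n j i = 1/2^n * (\<Prod>k\<in>{1..n}. w j k (i k))"
proof -
  have a: "(\<Prod>k\<in>{5..n}. w j k (i k)) = (\<Prod>k\<in>{5..n}. (-1) ^ (j k * i k))"
    by (rule prod.cong) (auto simp: w_def)
  have g1: "g (j 1) (j 2) (i 1) (i 2) = w j 1 (i 1) * w j 2 (i 2)"
    by (simp add: g_def w_def)
  have g3: "g (j 3) (j 4) (i 3) (i 4) = w j 3 (i 3) * w j 4 (i 4)"
    by (simp add: g_def w_def)
  show ?thesis unfolding coef_def Icc_split[OF assms] using a g1 g3
    by (simp add: mult_ac)
qed

lemma ham_prod:
  fixes r :: real
  shows "r ^ hamming n i i' = (\<Prod>k\<in>{1..n}. if i k \<noteq> i' k then r else 1)"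
  by (simp add: prod_if_pow hamming_def)

definition Q :: "real \<Rightarrow> (nat \<Rightarrow> nat) \<Rightarrow> nat \<Rightarrow> real" where
  "Q rho j k = (\<Sum>a\<in>{0,1::nat}. \<Sum>b\<in>{0,1}. w j k a * w j k b * (if a \<noteq> b then rho else 1))"

lemma main_sum:
  assumes "4 \<le> n"
  shows "(\<Sum>i\<in>Omega n. \<Sum>i'\<in>Omega n. coef n j i * coef n j i' * (sg * rho ^ hamming n i i'))
     = sg/(2^n)^2 * (\<Prod>k\<in>{1..n}. Q rho j k)"
proof -
  have "(\<Sum>i\<in>Omega n. \<Sum>i'\<in>Omega n. coef n j i * coef n j i' * (sg * rho ^ hamming n i i'))
     = (\<Sum>i\<in>Omega n. \<Sum>i'\<in>Omega n. sg/(2^n)^2 * (\<Prod>k\<in>{1..n}. w j k (i k) * w j k (i' k) * (if i k \<noteq> i' k then rho else 1)))"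
    unfolding coef_prod[OF assms] ham_prod
    by (intro sum.cong refl) (simp add: prod.distrib power2_eq_square)
  also have "\<dots> = sg/(2^n)^2 * (\<Sum>i\<in>Omega n. \<Sum>i'\<in>Omega n. (\<Prod>k\<in>{1..n}. w j k (i k) * w j k (i' k) * (if i k \<noteq> i' k then rho else 1)))"
    by (simp add: sum_distrib_left)
  also have "\<dots> = sg/(2^n)^2 * (\<Prod>k\<in>{1..n}. Q rho j k)"
    unfolding Omega_def Q_def
    by (subst sum_sum_PiE) auto
  finally show ?thesis .
qed

lemma Q_tail:
  assumes "5 \<le> k" "j k \<in> {0,1}"
  shows "Q rho j k = (if j k = 1 then 2*(1-rho) else 2*(1+rho))"
  using assms by (auto simp: Q_def w_def)

lemma Q12:
  assumes "j 1 \<in> {0,1}" "j 2 \<in> {0,1}"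
  shows "Q rho j 1 * Q rho j 2 = 4 * (1+rho)^(if j 1 = 0 then 2 - j 2 else 0)
      * (1-rho)^(if j 1 = 0 then j 2 else 1)"
proof -
  have s2: "sqrt 2 * sqrt 2 = (2::real)" by simp
  have *: "x \<in> {0,1} \<Longrightarrow> x = 0 \<or> x = 1" for x :: nat by auto
  show ?thesis using *[OF assms(1)] *[OF assms(2)]
    by (elim disjE) (simp_all add: Q_def w_def algebra_simps s2 power2_eq_square)
qed

lemma Q34:
  assumes "j 3 \<in> {0,1}" "j 4 \<in> {0,1}"
  shows "Q rho j 3 * Q rho j 4 = 4 * (1+rho)^(if j 3 = 0 then 2 - j 4 else 0)
      * (1-rho)^(if j 3 = 0 then j 4 else 1)"
proof -
  have s2: "sqrt 2 * sqrt 2 = (2::real)" by simp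
  have *: "x \<in> {0,1} \<Longrightarrow> x = 0 \<or> x = 1" for x :: nat by auto
  show ?thesis using *[OF assms(1)] *[OF assms(2)]
    by (elim disjE) (simp_all add: Q_def w_def algebra_simps s2 power2_eq_square)
qed

lemma Q_tail_prod:
  assumes "\<And>k. k \<in> {5..n} \<Longrightarrow> j k \<in> {0,1}"
  shows "(\<Prod>k\<in>{5..n}. Q rho j k) = (2*(1-rho))^(ones j {5..n}) * (2*(1+rho))^(n - 4 - ones j {5..n})"
proof -
  have "(\<Prod>k\<in>{5..n}. Q rho j k) = (\<Prod>k\<in>{5..n}. if j k = 1 then 2*(1-rho) else 2*(1+rho))"
    using assms by (intro prod.cong refl Q_tail) auto
  also have "\<dots> = (2*(1-rho))^card ({5..n} \<inter> {k. j k = 1}) * (2*(1+rho))^card ({5..n} \<inter> - {k. j k = 1})"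
    by (simp add: prod.If_cases)
  also have "card ({5..n} \<inter> - {k. j k = 1}) = card {5..n} - card ({5..n} \<inter> {k. j k = 1})"
    by (simp add: Diff_eq[symmetric] card_Diff_subset_Int)
  moreover have o: "ones j {5..n} = card ({5..n} \<inter> {k. j k = 1})"
    unfolding ones_def by (rule arg_cong[where f=card]) blast
  ultimately show ?thesis unfolding o by simp
qed

lemma ones_sum: "finite K \<Longrightarrow> ones j K = (\<Sum>k\<in>K. if j k = 1 then 1 else 0)"
  unfolding ones_def by (rule card_sum_if)

lemma comb:
  assumes "4 \<le> n" "s \<le> 2" "j \<in> Omega_sl n s l"
  shows "sg/(2^n)^2 * (\<Prod>k\<in>{1..n}. Q rho j k) = sg/2^n*(1+rho)^(n-l-s)*(1-rho)^l"
proof -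
  have jO: "j \<in> Omega n" using assms(3) unfolding Omega_sl_def by (auto split: if_splits)
  have jv: "\<And>k. k \<in> {1..n} \<Longrightarrow> j k \<in> {0,1}" using jO unfolding Omega_def by auto
  have j1: "j 1 \<in> {0,1}" and j2: "j 2 \<in> {0,1}" and j3: "j 3 \<in> {0,1}" and j4: "j 4 \<in> {0,1}"
    using jv assms(1) by auto
  define m where "m = ones j {5..n}"
  define r where "r = n - 4 - m"
  have mle: "m \<le> n - 4"
  proof -
    have "m \<le> card {5..n}" unfolding m_def ones_def by (rule card_mono) auto
    thus ?thesis by simp
  qed
  have nr: "n = 4 + m + r" using mle assms(1) unfolding r_def by simp
  have c2: "(if j 2 = 1 then 1 else 0) = j 2" using j2 by auto
  have c4: "(if j 4 = 1 then 1 else 0) = j 4" using j4 by auto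
  have o1: "ones j ({2,4} \<union> {5..n}) = j 2 + j 4 + m"
  proof -
    have "{2,4} \<union> {5..n} = insert 2 (insert 4 {5..n})" by auto
    thus ?thesis using j2 j4 unfolding m_def by (auto simp add: ones_sum)
  qed
  have o2: "ones j {4..n} = j 4 + m"
  proof -
    have "{4..n} = insert 4 {5..n}" using assms(1) by auto
    thus ?thesis using j4 unfolding m_def by (auto simp add: ones_sum)
  qed
  have o3: "ones j ({2} \<union> {5..n}) = j 2 + m"
  proof -
    have "{2} \<union> {5..n} = insert 2 {5..n}" by auto
    thus ?thesis using j2 unfolding m_def by (auto simp add: ones_sum)
  qed
  define a1 where "a1 = (if j 1 = 0 then 2 - j 2 else 0)"
  define b1 where "b1 = (if j 1 = 0 then j 2 else 1)"
  define a2 where "a2 = (if j 3 = 0 then 2 - j 4 else 0)"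
  define b2 where "b2 = (if j 3 = 0 then j 4 else 1)"
  have md: "ones j {5..n} = m" by (simp add: m_def)
  have lb0: "l = b1 + b2 + m \<and> a1 + b1 + a2 + b2 + s = 4"
    using assms(2,3) j1 j2 j3 j4 md o1 o2 o3
    unfolding Omega_sl_def a1_def b1_def a2_def b2_def
    by (auto split: if_splits)
  have lb: "l = b1 + b2 + m \<and> n - l - s = a1 + a2 + r"
    using lb0 nr by auto
  have P: "(\<Prod>k\<in>{1..n}. Q rho j k) = (Q rho j 1 * Q rho j 2) * (Q rho j 3 * Q rho j 4) * (\<Prod>k\<in>{5..n}. Q rho j k)"
    unfolding Icc_split[OF assms(1)] by (simp add: mult_ac)
  have T: "(\<Prod>k\<in>{5..n}. Q rho j k) = (2*(1-rho))^m * (2*(1+rho))^r"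
    unfolding m_def r_def by (rule Q_tail_prod) (use jv in auto)
  have h12: "Q rho j 1 * Q rho j 2 = 4*(1+rho)^a1*(1-rho)^b1"
    using Q12[OF j1 j2] unfolding a1_def b1_def .
  have h34: "Q rho j 3 * Q rho j 4 = 4*(1+rho)^a2*(1-rho)^b2"
    using Q34[OF j3 j4] unfolding a2_def b2_def .
  show ?thesis unfolding P T h12 h34
    using arith_final[OF nr conjunct1[OF lb] conjunct2[OF lb], of sg rho] .
qed

theorem theorem1:
  fixes M :: "'a measure" and tau :: "(nat \<Rightarrow> nat) \<Rightarrow> 'a \<Rightarrow> real"
    and n s l :: nat and sigma2 rho :: real and j :: "nat \<Rightarrow> nat"
  assumes "prob_space M"
    and "n \<ge> 4" and "sigma2 > 0" and "0 < rho" and "rho < 1"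
    and meas: "\<And>i. i \<in> Omega n \<Longrightarrow> tau i \<in> borel_measurable M"
    and sq_int: "\<And>i. i \<in> Omega n \<Longrightarrow> integrable M (\<lambda>\<omega>. (tau i \<omega>)\<^sup>2)"
    and mean0: "\<And>i. i \<in> Omega n \<Longrightarrow> prob_space.expectation M (tau i) = 0"
    and cov: "\<And>i i'. i \<in> Omega n \<Longrightarrow> i' \<in> Omega n \<Longrightarrow>
               covariance M (tau i) (tau i') = sigma2 * rho ^ hamming n i i'"
    and "s \<le> 2" and "1 \<le> l" and "l \<le> n - 2"
    and "j \<in> Omega_sl n s l"
  shows "prob_space.variance M (beta n tau j)
           = sigma2 / 2 ^ n * (1 + rho) ^ (n - l - s) * (1 - rho) ^ l"
proof -
  interpret P: prob_space M by fact
  have finO: "finite (Omega n)" unfolding Omega_def by (simp add: finite_PiE)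
  have int1: "integrable M (tau i)" if "i \<in> Omega n" for i
    using P.square_integrable_imp_integrable[OF meas[OF that] sq_int[OF that]] .
  have int2: "integrable M (\<lambda>\<omega>. tau i \<omega> * tau i' \<omega>)" if "i \<in> Omega n" "i' \<in> Omega n" for i i'
  proof (rule Bochner_Integration.integrable_bound)
    show "integrable M (\<lambda>\<omega>. (tau i \<omega>)\<^sup>2 + (tau i' \<omega>)\<^sup>2)"
      using sq_int that by auto
    show "(\<lambda>\<omega>. tau i \<omega> * tau i' \<omega>) \<in> borel_measurable M"
      using meas that by measurable
    show "AE x in M. norm (tau i x * tau i' x) \<le> norm ((tau i x)\<^sup>2 + (tau i' x)\<^sup>2)"
    proof (rule AE_I2)
      fix x
      have "\<bar>tau i x * tau i' x\<bar> \<le> (tau i x)\<^sup>2 + (tau i' x)\<^sup>2"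
        by (rule abs_prod_le_sq)
      thus "norm (tau i x * tau i' x) \<le> norm ((tau i x)\<^sup>2 + (tau i' x)\<^sup>2)" by simp
    qed
  qed
  have E0: "P.expectation (beta n tau j) = 0"
    unfolding beta_def using int1 mean0 by (simp add: Bochner_Integration.integral_sum finO)
  have sq: "(beta n tau j \<omega>)\<^sup>2 = (\<Sum>i\<in>Omega n. \<Sum>i'\<in>Omega n. coef n j i * coef n j i' * (tau i \<omega> * tau i' \<omega>))" for \<omega>
    unfolding beta_def power2_eq_square sum_product by (simp add: mult_ac)
  have cv: "covariance M (tau i) (tau i') = P.expectation (\<lambda>\<omega>. tau i \<omega> * tau i' \<omega>)"
    if "i \<in> Omega n" "i' \<in> Omega n" for i i'
    using mean0 that unfolding covariance_def by simp
  have "P.variance (beta n tau j) = P.expectation (\<lambda>\<omega>. (beta n tau j \<omega>)\<^sup>2)"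
    using E0 by simp
  also have "\<dots> = (\<Sum>i\<in>Omega n. \<Sum>i'\<in>Omega n. coef n j i * coef n j i' * P.expectation (\<lambda>\<omega>. tau i \<omega> * tau i' \<omega>))"
    unfolding sq using int2
    by (simp add: Bochner_Integration.integral_sum finO Bochner_Integration.integrable_sum)
  also have "\<dots> = (\<Sum>i\<in>Omega n. \<Sum>i'\<in>Omega n. coef n j i * coef n j i' * (sigma2 * rho ^ hamming n i i'))"
    using cv cov by (intro sum.cong refl) auto
  also have "\<dots> = sigma2/(2^n)^2 * (\<Prod>k\<in>{1..n}. Q rho j k)"
    by (rule main_sum) fact
  also have "\<dots> = sigma2 / 2 ^ n * (1 + rho) ^ (n - l - s) * (1 - rho) ^ l"
    by (rule comb) fact+
  finally show ?thesis .
qed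

end
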